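(* Let $a=\{a_1,\dots,a_m\}$ and $b=\{b_1,\dots,b_m\}$ be positive integers with $a_r\neq b_r$ for all $r$, and fix $n\ge 0$. There is a function $P_{n,a,b}:\mathbb{Z}_{\ge0}\to\mathbb{Q}$ and a number $N=N(n,a,b)$ such that for every $s\ge1$ and all positive integers $k_1,\dots,k_s$ with $k_1+1,\dots,k_s+1$ primes larger than $N$, the number of $n$-element independent sets of $G(a,b,k_1)+\cdots+G(a,b,k_s)$ equals $P_{n,a,b}(k_1+\cdots+k_s)$. Furthermore, if the ratios $a_1/b_1,\dots,a_m/b_m$ are multiplicatively independent, then $P_{n,a,b}$ can be chosen to depend only on $n$ and $m$ (i.e. the same function works for all such $a,b$ with the same $m$).
   Context: A set $\{c_1,\dots,c_m\}$ of positive rationals is multiplicatively independent if $c_1^{i_1}\cdots c_m^{i_m}=1$ with integers $i_1,\dots,i_m$ implies $i_1=\dots=i_m=0$. For positive integers $k$, $G(a,b,k)$ is the simple graph with vertex set $\{1,2,\dots,k\}$ in which distinct vertices $i,j$ are adjacent if and only if $a_ri\equiv b_rj\pmod{k+1}$ or $a_rj\equiv b_ri\pmod{k+1}$ for some $1\le r\le m$. $G_1+\cdots+G_s$ denotes the disjoint union of graphs. An independent set is a set of vertices no two of which are adjacent. *)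

theory Defs
  imports Complex_Main "HOL-Number_Theory.Number_Theory"
begin

(* a, b are lists of length m; index r ranges over 0..<m (0-based). *)

text \<open>Adjacency in G(a,b,k) on vertex set {1..k}.\<close>
definition gadj :: "nat list \<Rightarrow> nat list \<Rightarrow> nat \<Rightarrow> nat \<Rightarrow> nat \<Rightarrow> bool" where
  "gadj a b k i j \<longleftrightarrow> i \<noteq> j \<and>
     (\<exists>r<length a. [a!r * i = b!r * j] (mod (k+1)) \<or> [a!r * j = b!r * i] (mod (k+1)))"

text \<open>Disjoint union G(a,b,k_1)+...+G(a,b,k_s): vertices (t,i) with t < s, 1 <= i <= k_t.\<close>
definition union_verts :: "nat list \<Rightarrow> (nat \<times> nat) set" where
  "union_verts ks = {(t,i). t < length ks \<and> i \<in> {1..ks!t}}"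

definition union_adj :: "nat list \<Rightarrow> nat list \<Rightarrow> nat list \<Rightarrow> nat \<times> nat \<Rightarrow> nat \<times> nat \<Rightarrow> bool" where
  "union_adj a b ks x y \<longleftrightarrow> fst x = fst y \<and> gadj a b (ks ! fst x) (snd x) (snd y)"

definition num_indep_sets :: "nat list \<Rightarrow> nat list \<Rightarrow> nat list \<Rightarrow> nat \<Rightarrow> nat" where
  "num_indep_sets a b ks n = card {S. S \<subseteq> union_verts ks \<and> card S = n \<and>
      (\<forall>x\<in>S. \<forall>y\<in>S. \<not> union_adj a b ks x y)}"

definition mult_indep :: "rat list \<Rightarrow> bool" where
  "mult_indep cs \<longleftrightarrow> (\<forall>e :: nat \<Rightarrow> int.
      (\<Prod>r<length cs. (cs!r) powi (e r)) = 1 \<longrightarrow> (\<forall>r<length cs. e r = 0))"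

definition ratios :: "nat list \<Rightarrow> nat list \<Rightarrow> rat list" where
  "ratios a b = map (\<lambda>r. of_nat (a!r) / of_nat (b!r)) [0..<length a]"

definition admissible :: "nat \<Rightarrow> nat list \<Rightarrow> nat list \<Rightarrow> bool" where
  "admissible m a b \<longleftrightarrow> length a = m \<and> length b = m \<and>
     (\<forall>r<m. a!r > 0 \<and> b!r > 0 \<and> a!r \<noteq> b!r)"

end

theory Submission
  imports Defs
begin
definition nst :: "nat list \<Rightarrow> nat list \<Rightarrow> nat \<times> bool \<Rightarrow> nat" where
  "nst a b s = (if snd s then a ! fst s else b ! fst s)"
definition dst :: "nat list \<Rightarrow> nat list \<Rightarrow> nat \<times> bool \<Rightarrow> nat" where
  "dst a b s = (if snd s then b ! fst s else a ! fst s)"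
definition Nw :: "nat list \<Rightarrow> nat list \<Rightarrow> (nat \<times> bool) list \<Rightarrow> nat" where
  "Nw a b w = prod_list (map (nst a b) w)"
definition Dw :: "nat list \<Rightarrow> nat list \<Rightarrow> (nat \<times> bool) list \<Rightarrow> nat" where
  "Dw a b w = prod_list (map (dst a b) w)"
definition validw :: "nat \<Rightarrow> (nat \<times> bool) list \<Rightarrow> bool" where
  "validw m w \<longleftrightarrow> (\<forall>s\<in>set w. fst s < m)"
definition repw :: "nat list \<Rightarrow> nat list \<Rightarrow> nat \<Rightarrow> nat \<Rightarrow> nat \<Rightarrow> (nat \<times> bool) list \<Rightarrow> bool" where
  "repw a b p v x w \<longleftrightarrow> [x * Dw a b w = v * Nw a b w] (mod p)"
definition Bm :: "nat list \<Rightarrow> nat list \<Rightarrow> nat \<Rightarrow> nat \<Rightarrow> nat \<Rightarrow> bool" where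
  "Bm a b p u w \<longleftrightarrow> u = w \<or> (\<exists>r<length a. [a!r*u = b!r*w] (mod p) \<or> [a!r*w = b!r*u] (mod p))"
definition goodm :: "nat list \<Rightarrow> nat list \<Rightarrow> nat \<Rightarrow> bool" where
  "goodm a b p \<longleftrightarrow> prime p \<and> length b = length a \<and>
     (\<forall>r<length a. 0 < a!r \<and> a!r < p \<and> 0 < b!r \<and> b!r < p)"

lemma Nw_snoc: "Nw a b (w @ [s]) = Nw a b w * nst a b s"
  by (simp add: Nw_def)
lemma Dw_snoc: "Dw a b (w @ [s]) = Dw a b w * dst a b s"
  by (simp add: Dw_def)
lemma Nw_Nil[simp]: "Nw a b [] = 1" by (simp add: Nw_def)
lemma Dw_Nil[simp]: "Dw a b [] = 1" by (simp add: Dw_def)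

lemma coprime_small: "prime (p::nat) \<Longrightarrow> 0 < x \<Longrightarrow> x < p \<Longrightarrow> coprime x p"
  by (metis coprime_commute not_less prime_imp_coprime_nat dvd_imp_le)

lemma coprime_Nw:
  assumes "goodm a b p" "validw (length a) w"
  shows "coprime (Nw a b w) p \<and> coprime (Dw a b w) p"
  using assms(2)
proof (induction w rule: rev_induct)
  case Nil then show ?case by simp
next
  case (snoc s w)
  then have v: "validw (length a) w" and r: "fst s < length a" by (auto simp: validw_def)
  from assms(1) r have "coprime (nst a b s) p \<and> coprime (dst a b s) p"
    unfolding goodm_def nst_def dst_def by (auto intro: coprime_small)
  with snoc.IH[OF v] show ?case by (simp add: Nw_snoc Dw_snoc)
qed

lemma rep_L1:
  assumes g: "goodm a b p" and vw: "validw (length a) w1" "validw (length a) w2"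
    and r: "repw a b p v x w1" and e: "[Nw a b w1 * Dw a b w2 = Nw a b w2 * Dw a b w1] (mod p)"
  shows "repw a b p v x w2"
proof -
  have c: "coprime (Dw a b w1) p" using coprime_Nw[OF g vw(1)] by simp
  have "[x * Dw a b w2 * Dw a b w1 = x * Dw a b w1 * Dw a b w2] (mod p)" by (simp add: ac_simps)
  also have "[x * Dw a b w1 * Dw a b w2 = v * Nw a b w1 * Dw a b w2] (mod p)"
    using r unfolding repw_def by (rule cong_scalar_right)
  also have "[v * Nw a b w1 * Dw a b w2 = v * (Nw a b w2 * Dw a b w1)] (mod p)"
    by (metis cong_scalar_left e mult.assoc)
  finally have "[x * Dw a b w2 * Dw a b w1 = v * Nw a b w2 * Dw a b w1] (mod p)" by (simp add: ac_simps)
  then show ?thesis unfolding repw_def using cong_mult_rcancel_nat[OF c] by blast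
qed

lemma rep_L2:
  assumes g: "goodm a b p" and vv: "0 < v" "v < p"
    and r: "repw a b p v x w1" "repw a b p v x w2"
  shows "[Nw a b w1 * Dw a b w2 = Nw a b w2 * Dw a b w1] (mod p)"
proof -
  have c: "coprime v p" using g vv coprime_small goodm_def by blast
  have "[Nw a b w1 * Dw a b w2 * v = (v * Nw a b w1) * Dw a b w2] (mod p)" by (simp add: ac_simps)
  also have "[(v * Nw a b w1) * Dw a b w2 = (x * Dw a b w1) * Dw a b w2] (mod p)"
    using r(1) unfolding repw_def by (rule cong_scalar_right[OF cong_sym])
  also have "[(x * Dw a b w1) * Dw a b w2 = (x * Dw a b w2) * Dw a b w1] (mod p)" by (simp add: ac_simps)
  also have "[(x * Dw a b w2) * Dw a b w1 = (v * Nw a b w2) * Dw a b w1] (mod p)"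
    using r(2) unfolding repw_def by (rule cong_scalar_right)
  finally have "[Nw a b w1 * Dw a b w2 * v = Nw a b w2 * Dw a b w1 * v] (mod p)" by (simp add: ac_simps)
  then show ?thesis using cong_mult_rcancel_nat[OF c] by blast
qed

lemma rep_L3:
  assumes g: "goodm a b p" and vw: "validw (length a) w"
    and r: "repw a b p v x w" "repw a b p v y w" and xy: "x < p" "y < p"
  shows "x = y"
proof -
  have c: "coprime (Dw a b w) p" using coprime_Nw[OF g vw] by simp
  have "[x * Dw a b w = y * Dw a b w] (mod p)" using r unfolding repw_def
    by (meson cong_sym cong_trans)
  then have "[x = y] (mod p)" using cong_mult_rcancel_nat[OF c] by blast
  then show ?thesis using xy cong_less_modulus_unique_nat by blast
qed

lemma rep_L4a:
  assumes r: "repw a b p v x w" and e: "[a!i * x = b!i * y] (mod p)"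
  shows "repw a b p v y (w @ [(i,True)])"
proof -
  have "[y * (Dw a b w * b!i) = (b!i * y) * Dw a b w] (mod p)" by (simp add: ac_simps)
  also have "[(b!i * y) * Dw a b w = (a!i * x) * Dw a b w] (mod p)" using e by (rule cong_scalar_right[OF cong_sym])
  also have "[(a!i * x) * Dw a b w = a!i * (x * Dw a b w)] (mod p)" by (simp add: ac_simps)
  also have "[a!i * (x * Dw a b w) = a!i * (v * Nw a b w)] (mod p)" using r unfolding repw_def by (rule cong_scalar_left)
  also have "[a!i * (v * Nw a b w) = v * (Nw a b w * a!i)] (mod p)" by (simp add: ac_simps)
  finally show ?thesis unfolding repw_def Nw_snoc Dw_snoc by (simp add: nst_def dst_def)
qed

lemma rep_L4b:
  assumes r: "repw a b p v x w" and e: "[a!i * y = b!i * x] (mod p)"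
  shows "repw a b p v y (w @ [(i,False)])"
proof -
  have "[y * (Dw a b w * a!i) = (a!i * y) * Dw a b w] (mod p)" by (simp add: ac_simps)
  also have "[(a!i * y) * Dw a b w = (b!i * x) * Dw a b w] (mod p)" using e by (rule cong_scalar_right)
  also have "[(b!i * x) * Dw a b w = b!i * (x * Dw a b w)] (mod p)" by (simp add: ac_simps)
  also have "[b!i * (x * Dw a b w) = b!i * (v * Nw a b w)] (mod p)" using r unfolding repw_def by (rule cong_scalar_left)
  also have "[b!i * (v * Nw a b w) = v * (Nw a b w * b!i)] (mod p)" by (simp add: ac_simps)
  finally show ?thesis unfolding repw_def Nw_snoc Dw_snoc by (simp add: nst_def dst_def)
qed

lemma rep_L4a':
  assumes g: "goodm a b p" and vw: "validw (length a) w"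
    and r: "repw a b p v x w" "repw a b p v y (w @ [(i,True)])"
  shows "[a!i * x = b!i * y] (mod p)"
proof -
  have c: "coprime (Dw a b w) p" using coprime_Nw[OF g vw] by simp
  have "[(a!i * x) * Dw a b w = a!i * (x * Dw a b w)] (mod p)" by (simp add: ac_simps)
  also have "[a!i * (x * Dw a b w) = a!i * (v * Nw a b w)] (mod p)" using r(1) unfolding repw_def by (rule cong_scalar_left)
  also have "[a!i * (v * Nw a b w) = y * (Dw a b w * b!i)] (mod p)"
    using r(2) unfolding repw_def Nw_snoc Dw_snoc by (simp add: nst_def dst_def ac_simps cong_sym)
  also have "[y * (Dw a b w * b!i) = (b!i * y) * Dw a b w] (mod p)" by (simp add: ac_simps)
  finally show ?thesis using cong_mult_rcancel_nat[OF c] by blast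
qed

lemma rep_L4b':
  assumes g: "goodm a b p" and vw: "validw (length a) w"
    and r: "repw a b p v x w" "repw a b p v y (w @ [(i,False)])"
  shows "[a!i * y = b!i * x] (mod p)"
proof -
  have c: "coprime (Dw a b w) p" using coprime_Nw[OF g vw] by simp
  have "[(b!i * x) * Dw a b w = b!i * (x * Dw a b w)] (mod p)" by (simp add: ac_simps)
  also have "[b!i * (x * Dw a b w) = b!i * (v * Nw a b w)] (mod p)" using r(1) unfolding repw_def by (rule cong_scalar_left)
  also have "[b!i * (v * Nw a b w) = y * (Dw a b w * a!i)] (mod p)"
    using r(2) unfolding repw_def Nw_snoc Dw_snoc by (simp add: nst_def dst_def ac_simps cong_sym)
  also have "[y * (Dw a b w * a!i) = (a!i * y) * Dw a b w] (mod p)" by (simp add: ac_simps)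
  finally show ?thesis using cong_mult_rcancel_nat[OF c] by (blast intro: cong_sym)
qed

lemma rep_L5:
  assumes g: "goodm a b p" and vw: "validw (length a) w" and vv: "0 < v" "v < p"
  shows "\<exists>y. 0 < y \<and> y < p \<and> repw a b p v y w"
proof -
  have c: "coprime (Dw a b w) p" and cn: "coprime (Nw a b w) p" using coprime_Nw[OF g vw] by auto
  have cv: "coprime v p" using g vv coprime_small goodm_def by blast
  obtain t where t: "[Dw a b w * t = Suc 0] (mod p)" using cong_solve_coprime_nat[OF c] by blast
  have p1: "p > 1" using g prime_gt_1_nat unfolding goodm_def by blast
  define y where "y = (v * Nw a b w * t) mod p"
  have "[y * Dw a b w = (v * Nw a b w) * (Dw a b w * t)] (mod p)"
    unfolding y_def cong_def by (metis mod_mult_left_eq mult.commute mult.left_commute)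
  also have "[(v * Nw a b w) * (Dw a b w * t) = (v * Nw a b w) * 1] (mod p)" using cong_scalar_left[OF t, of "v * Nw a b w"] by simp
  finally have r: "repw a b p v y w" unfolding repw_def by simp
  have "y \<noteq> 0"
  proof
    assume "y = 0"
    with r have "[0 = v * Nw a b w] (mod p)" unfolding repw_def by simp
    then have "p dvd v * Nw a b w" by (metis cong_0_iff cong_sym)
    moreover have "coprime (v * Nw a b w) p" using cv cn by simp
    ultimately show False using p1
      by (metis coprime_absorb_right coprime_commute nat_dvd_1_iff_1 not_less_iff_gr_or_eq)
  qed
  moreover have "y < p" unfolding y_def using p1 by simp
  ultimately show ?thesis using r by auto
qed

definition Sol :: "nat list \<Rightarrow> nat list \<Rightarrow> nat \<Rightarrow> nat \<Rightarrow> nat set \<Rightarrow> (nat \<times> nat) set \<Rightarrow> nat \<Rightarrow> (nat \<Rightarrow> nat) set" where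
  "Sol a b p v I E i0 = {x \<in> Pi\<^sub>E I (\<lambda>_. {1..p-1}). x i0 = v \<and>
      (\<forall>(i,j)\<in>E. i \<in> I \<longrightarrow> j \<in> I \<longrightarrow> Bm a b p (x i) (x j))}"

definition symE :: "nat set \<Rightarrow> (nat \<times> nat) set \<Rightarrow> (nat \<times> nat) set" where
  "symE I E = {(i,j). ((i,j) \<in> E \<or> (j,i) \<in> E) \<and> i \<in> I \<and> j \<in> I}"

definition Hyp :: "nat list \<Rightarrow> nat list \<Rightarrow> nat \<Rightarrow> ((nat \<times> bool) list \<Rightarrow> (nat \<times> bool) list \<Rightarrow> bool) \<Rightarrow> nat \<Rightarrow> bool" where
  "Hyp a b p Q h \<longleftrightarrow> (\<forall>w1 w2. validw (length a) w1 \<and> validw (length a) w2 \<and> length w1 \<le> h \<and> length w2 \<le> h \<longrightarrow>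
      ([Nw a b w1 * Dw a b w2 = Nw a b w2 * Dw a b w1] (mod p) \<longleftrightarrow> Q w1 w2))"

definition cmodel :: "nat list \<Rightarrow> nat list \<Rightarrow> nat \<Rightarrow> nat \<Rightarrow> bool" where
  "cmodel a b p v \<longleftrightarrow> goodm a b p \<and> 0 < v \<and> v < p"

lemma Bm_sym: "Bm a b p u w \<Longrightarrow> Bm a b p w u"
  unfolding Bm_def by blast

lemma validw_snoc: "validw m (w @ [s]) \<longleftrightarrow> validw m w \<and> fst s < m"
  by (auto simp: validw_def)

lemma bstep:
  assumes "repw a b p v x w" "Bm a b p x y"
  shows "repw a b p v y w \<or> (\<exists>r<length a. repw a b p v y (w @ [(r,True)]) \<or> repw a b p v y (w @ [(r,False)]))"
proof -
  from assms(2) consider "x = y" | r where "r < length a" "[a!r*x = b!r*y] (mod p)" | r where "r < length a" "[a!r*y = b!r*x] (mod p)"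
    unfolding Bm_def by blast
  then show ?thesis
  proof cases
    case 1 then show ?thesis using assms(1) by simp
  next
    case (2 r) then show ?thesis using rep_L4a[OF assms(1)] by blast
  next
    case (3 r) then show ?thesis using rep_L4b[OF assms(1)] by blast
  qed
qed

lemma word_exists:
  assumes cm: "cmodel a b p v" and x: "x \<in> Sol a b p v I E i0"
  shows "(i0, j) \<in> (symE I E) ^^ d \<Longrightarrow> \<exists>w. validw (length a) w \<and> length w \<le> d \<and> repw a b p v (x j) w"
proof (induction d arbitrary: j)
  case 0
  then have "j = i0" by simp
  then show ?case using x by (intro exI[of _ "[]"]) (auto simp: Sol_def repw_def validw_def)
next
  case (Suc d)
  then obtain y where y: "(i0,y) \<in> symE I E ^^ d" "(y,j) \<in> symE I E" by auto
  from Suc.IH[OF y(1)] obtain w where w: "validw (length a) w" "length w \<le> d" "repw a b p v (x y) w" by blast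
  have B: "Bm a b p (x y) (x j)" using y(2) x unfolding symE_def Sol_def by (auto intro: Bm_sym)
  from bstep[OF w(3) B] show ?case
  proof (elim disjE exE conjE)
    assume "repw a b p v (x j) w" then show ?case using w by auto
  next
    fix r assume "r < length a" "repw a b p v (x j) (w @ [(r, True)])"
    then show ?case using w by (intro exI[of _ "w @ [(r, True)]"]) (auto simp: validw_snoc)
  next
    fix r assume "r < length a" "repw a b p v (x j) (w @ [(r, False)])"
    then show ?case using w by (intro exI[of _ "w @ [(r, False)]"]) (auto simp: validw_snoc)
  qed
qed

lemma rep_Nil: "repw a b p v v []" by (simp add: repw_def)

lemma rep_Nil_unique: "repw a b p v y [] \<Longrightarrow> y < p \<Longrightarrow> v < p \<Longrightarrow> y = v"
  by (simp add: repw_def cong_less_modulus_unique_nat)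

context
  fixes a b a' b' :: "nat list" and p p' v v' :: nat and Q and L :: nat and I E i0
  assumes cm: "cmodel a b p v" and cm': "cmodel a' b' p' v'"
    and len: "length a' = length a"
    and H: "Hyp a b p Q (Suc L)" and H': "Hyp a' b' p' Q (Suc L)"
    and conn: "\<forall>j\<in>I. \<exists>d\<le>L. (i0, j) \<in> (symE I E) ^^ d"
    and fin: "finite I" and i0: "i0 \<in> I"
begin

lemma g: "goodm a b p" and g': "goodm a' b' p'" and vv: "0 < v" "v < p" and vv': "0 < v'" "v' < p'"
  using cm cm' by (auto simp: cmodel_def)

definition Phi :: "(nat \<Rightarrow> nat) \<Rightarrow> nat \<Rightarrow> nat" where
  "Phi x = (\<lambda>j. if j \<in> I then (THE y. 0 < y \<and> y < p' \<and> (\<exists>w. validw (length a) w \<and> length w \<le> L \<and>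
        repw a b p v (x j) w \<and> repw a' b' p' v' y w)) else undefined)"

lemma transfer_eq:
  assumes "validw (length a) w1" "validw (length a) w2" "length w1 \<le> Suc L" "length w2 \<le> Suc L"
  shows "[Nw a b w1 * Dw a b w2 = Nw a b w2 * Dw a b w1] (mod p) \<longleftrightarrow>
         [Nw a' b' w1 * Dw a' b' w2 = Nw a' b' w2 * Dw a' b' w1] (mod p')"
  using H H' assms len unfolding Hyp_def by auto

lemma words:
  assumes x: "x \<in> Sol a b p v I E i0" and j: "j \<in> I"
  shows "\<exists>w. validw (length a) w \<and> length w \<le> L \<and> repw a b p v (x j) w"
proof -
  from conn j obtain d where "d \<le> L" "(i0, j) \<in> (symE I E) ^^ d" by blast
  with word_exists[OF cm x] show ?thesis by force
qed

lemma phi_char: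
  assumes x: "x \<in> Sol a b p v I E i0" and j: "j \<in> I"
    and w: "validw (length a) w" "length w \<le> L" "repw a b p v (x j) w"
  shows "0 < Phi x j \<and> Phi x j < p' \<and> repw a' b' p' v' (Phi x j) w"
proof -
  have w': "validw (length a') w" using w len by simp
  obtain y where y: "0 < y" "y < p'" "repw a' b' p' v' y w" using rep_L5[OF g' w' vv'] by blast
  have uniq: "y2 = y" if "0 < y2" "y2 < p'" "validw (length a) w2" "length w2 \<le> L"
     "repw a b p v (x j) w2" "repw a' b' p' v' y2 w2" for y2 w2
  proof -
    have "[Nw a b w * Dw a b w2 = Nw a b w2 * Dw a b w] (mod p)"
      using rep_L2[OF g vv w(3) that(5)] .
    then have "[Nw a' b' w * Dw a' b' w2 = Nw a' b' w2 * Dw a' b' w] (mod p')"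
      using transfer_eq w that by auto
    then have "repw a' b' p' v' y w2" using rep_L1[OF g' w'] y(3) that(3) len by simp
    then show ?thesis using rep_L3[OF g'] that y len by simp
  qed
  have "(THE y. 0 < y \<and> y < p' \<and> (\<exists>w. validw (length a) w \<and> length w \<le> L \<and>
        repw a b p v (x j) w \<and> repw a' b' p' v' y w)) = y"
    apply (rule the_equality)
    using y w apply blast
    using uniq by blast
  then show ?thesis using j y by (simp add: Phi_def)
qed

lemma phi_rep:
  assumes x: "x \<in> Sol a b p v I E i0" and j: "j \<in> I"
  shows "\<exists>w. validw (length a) w \<and> length w \<le> L \<and> repw a b p v (x j) w \<and>
    0 < Phi x j \<and> Phi x j < p' \<and> repw a' b' p' v' (Phi x j) w"
proof -
  obtain w where w: "validw (length a) w" "length w \<le> L" "repw a b p v (x j) w" using words[OF x j] by blast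
  show ?thesis using w phi_char[OF x j w] by blast
qed

lemma edge_transfer:
  assumes w1: "validw (length a) w1" "length w1 \<le> L" and w2: "validw (length a) w2" "length w2 \<le> L"
    and r1: "repw a b p v x w1" and r2: "repw a b p v y w2"
    and r1': "repw a' b' p' v' x' w1" and r2': "repw a' b' p' v' y' w2"
    and xy': "x' < p'" "y' < p'"
    and B: "Bm a b p x y"
  shows "Bm a' b' p' x' y'"
proof -
  have w1': "validw (length a') w1" and w2': "validw (length a') w2" using w1 w2 len by simp_all
  have tr: "repw a' b' p' v' y' w'" if t1: "repw a b p v y w'" and t2: "validw (length a) w'" and t3: "length w' \<le> Suc L" for w'
  proof -
    have t2': "validw (length a') w'" using t2 len by simp
    have "[Nw a b w' * Dw a b w2 = Nw a b w2 * Dw a b w'] (mod p)" using rep_L2[OF g vv t1 r2] .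
    then have "[Nw a' b' w' * Dw a' b' w2 = Nw a' b' w2 * Dw a' b' w'] (mod p')"
      using transfer_eq[OF t2 w2(1) t3] w2(2) by simp
    then have "[Nw a' b' w2 * Dw a' b' w' = Nw a' b' w' * Dw a' b' w2] (mod p')" by (rule cong_sym)
    then show ?thesis by (rule rep_L1[OF g' w2' t2' r2'])
  qed
  from B consider "x = y" | r where "r < length a" "[a!r*x = b!r*y] (mod p)" | r where "r < length a" "[a!r*y = b!r*x] (mod p)"
    unfolding Bm_def by blast
  then show ?thesis
  proof cases
    case 1
    then have "repw a' b' p' v' y' w1" using tr[OF _ w1(1)] r1 w1(2) by simp
    then have "x' = y'" using rep_L3[OF g' w1' r1' _ xy'] by simp
    then show ?thesis by (simp add: Bm_def)
  next
    case (2 r)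
    have "repw a b p v y (w1 @ [(r, True)])" using rep_L4a[OF r1 2(2)] .
    moreover have "validw (length a) (w1 @ [(r, True)])" using w1(1) 2(1) by (simp add: validw_snoc)
    moreover have "length (w1 @ [(r, True)]) \<le> Suc L" using w1(2) by simp
    ultimately have "repw a' b' p' v' y' (w1 @ [(r, True)])" by (rule tr)
    then have "[a'!r * x' = b'!r * y'] (mod p')" using rep_L4a'[OF g' w1' r1'] by simp
    then show ?thesis using 2(1) len unfolding Bm_def by auto
  next
    case (3 r)
    have "repw a b p v y (w1 @ [(r, False)])" using rep_L4b[OF r1 3(2)] .
    moreover have "validw (length a) (w1 @ [(r, False)])" using w1(1) 3(1) by (simp add: validw_snoc)
    moreover have "length (w1 @ [(r, False)]) \<le> Suc L" using w1(2) by simp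
    ultimately have "repw a' b' p' v' y' (w1 @ [(r, False)])" by (rule tr)
    then have "[a'!r * y' = b'!r * x'] (mod p')" using rep_L4b'[OF g' w1' r1'] by simp
    then show ?thesis using 3(1) len unfolding Bm_def by auto
  qed
qed

lemma phi_in:
  assumes x: "x \<in> Sol a b p v I E i0"
  shows "Phi x \<in> Sol a' b' p' v' I E i0"
proof -
  have "Phi x j \<in> {1..p'-1}" if "j \<in> I" for j
  proof -
    from phi_rep[OF x that] have "0 < Phi x j" "Phi x j < p'" by auto
    then show ?thesis by auto
  qed
  moreover have "Phi x j = undefined" if "j \<notin> I" for j using that by (simp add: Phi_def)
  ultimately have pi: "Phi x \<in> Pi\<^sub>E I (\<lambda>_. {1..p'-1})" by (auto simp: PiE_def extensional_def)
  have "repw a b p v (x i0) []" using x by (simp add: Sol_def rep_Nil)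
  then have "repw a' b' p' v' (Phi x i0) [] \<and> Phi x i0 < p'" using phi_char[OF x i0, of "[]"] by (simp add: validw_def)
  then have root: "Phi x i0 = v'" using rep_Nil_unique vv' by blast
  have "Bm a' b' p' (Phi x i) (Phi x j)" if ij: "(i,j) \<in> E" "i \<in> I" "j \<in> I" for i j
  proof -
    obtain w1 where w1: "validw (length a) w1" "length w1 \<le> L" "repw a b p v (x i) w1"
      "0 < Phi x i" "Phi x i < p'" "repw a' b' p' v' (Phi x i) w1" using phi_rep[OF x ij(2)] by blast
    obtain w2 where w2: "validw (length a) w2" "length w2 \<le> L" "repw a b p v (x j) w2"
      "0 < Phi x j" "Phi x j < p'" "repw a' b' p' v' (Phi x j) w2" using phi_rep[OF x ij(3)] by blast
    have "Bm a b p (x i) (x j)" using x ij by (auto simp: Sol_def)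
    then show ?thesis using edge_transfer w1 w2 by blast
  qed
  then show ?thesis using pi root by (auto simp: Sol_def)
qed

lemma phi_inj: "inj_on Phi (Sol a b p v I E i0)"
proof (rule inj_onI)
  fix x y assume x: "x \<in> Sol a b p v I E i0" and y: "y \<in> Sol a b p v I E i0" and e: "Phi x = Phi y"
  show "x = y"
  proof
    fix j
    show "x j = y j"
    proof (cases "j \<in> I")
      case False
      then show ?thesis using x y by (auto simp: Sol_def PiE_def extensional_def)
    next
      case True
      obtain w1 where w1: "validw (length a) w1" "length w1 \<le> L" "repw a b p v (x j) w1"
        "0 < Phi x j" "Phi x j < p'" "repw a' b' p' v' (Phi x j) w1" using phi_rep[OF x True] by blast
      obtain w2 where w2: "validw (length a) w2" "length w2 \<le> L" "repw a b p v (y j) w2"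
        "repw a' b' p' v' (Phi y j) w2" using phi_rep[OF y True] by blast
      have "[Nw a' b' w2 * Dw a' b' w1 = Nw a' b' w1 * Dw a' b' w2] (mod p')"
        using rep_L2[OF g' vv' w2(4)] w1(6) e by simp
      then have "[Nw a b w2 * Dw a b w1 = Nw a b w1 * Dw a b w2] (mod p)"
        using transfer_eq w1 w2 by auto
      then have "repw a b p v (y j) w1" using rep_L1[OF g w2(1) w1(1) w2(3)] by simp
      moreover have "x j < p" "y j < p" using x y True vv by (auto simp: Sol_def PiE_def Pi_def)
      ultimately show ?thesis using rep_L3[OF g w1(1) w1(3)] by simp
    qed
  qed
qed

lemma Sol_finite: "finite (Sol a' b' p' v' I E i0)"
  by (rule finite_subset[of _ "Pi\<^sub>E I (\<lambda>_. {1..p'-1})"]) (auto simp: Sol_def intro!: finite_PiE fin)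

lemma card_Sol_le: "card (Sol a b p v I E i0) \<le> card (Sol a' b' p' v' I E i0)"
  using card_inj_on_le[OF phi_inj _ Sol_finite] phi_in by blast

end

definition Bu :: "nat list \<Rightarrow> nat list \<Rightarrow> nat list \<Rightarrow> nat \<times> nat \<Rightarrow> nat \<times> nat \<Rightarrow> bool" where
  "Bu a b ks x y \<longleftrightarrow> x = y \<or> union_adj a b ks x y"

definition Zs :: "nat list \<Rightarrow> nat list \<Rightarrow> nat list \<Rightarrow> nat set \<Rightarrow> (nat \<times> nat) set \<Rightarrow> (nat \<Rightarrow> nat \<times> nat) set" where
  "Zs a b ks I E = {x \<in> Pi\<^sub>E I (\<lambda>_. union_verts ks). \<forall>(i,j)\<in>E. i \<in> I \<longrightarrow> j \<in> I \<longrightarrow> Bu a b ks (x i) (x j)}"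

lemma finite_union_verts: "finite (union_verts ks)"
  by (rule finite_subset[of _ "{..<length ks} \<times> {..Max (insert 0 (set ks))}"])
     (auto simp: union_verts_def intro!: le_trans[OF _ Max_ge])

lemma Zs_finite: "finite I \<Longrightarrow> finite (Zs a b ks I E)"
  by (rule finite_subset[of _ "Pi\<^sub>E I (\<lambda>_. union_verts ks)"])
     (auto simp: Zs_def intro!: finite_PiE finite_union_verts)

lemma Bu_sym: "Bu a b ks x y \<Longrightarrow> Bu a b ks y x"
  unfolding Bu_def union_adj_def gadj_def by auto

lemma restrict_split_inj:
  assumes "x \<in> Pi\<^sub>E I V" "y \<in> Pi\<^sub>E I V"
    and r1: "restrict x C = restrict y C" and r2: "restrict x (I - C) = restrict y (I - C)"
  shows "x = y"
proof
  fix j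
  show "x j = y j"
  proof (cases "j \<in> I")
    case False then show ?thesis using assms(1,2) False by (metis PiE_arb)
  next
    case jI: True
    show ?thesis
    proof (cases "j \<in> C")
      case True then show ?thesis using fun_cong[OF r1, of j] by simp
    next
      case False then show ?thesis using fun_cong[OF r2, of j] jI by simp
    qed
  qed
qed

lemma Zs_mem: "x \<in> Zs a b ks I E \<longleftrightarrow> x \<in> Pi\<^sub>E I (\<lambda>_. union_verts ks) \<and>
   (\<forall>i j. (i,j) \<in> E \<longrightarrow> i \<in> I \<longrightarrow> j \<in> I \<longrightarrow> Bu a b ks (x i) (x j))"
  unfolding Zs_def by blast

lemma Zs_restrict:
  assumes "x \<in> Zs a b ks I E" "C \<subseteq> I"
  shows "restrict x C \<in> Zs a b ks C E"
proof -
  have "restrict x C \<in> Pi\<^sub>E C (\<lambda>_. union_verts ks)" using assms unfolding Zs_mem PiE_def Pi_def by auto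
  moreover have "Bu a b ks (restrict x C i) (restrict x C j)" if "(i,j) \<in> E" "i \<in> C" "j \<in> C" for i j
  proof -
    have "i \<in> I" "j \<in> I" using that assms(2) by auto
    then have "Bu a b ks (x i) (x j)" using assms(1) that(1) unfolding Zs_mem by blast
    then show ?thesis using that by simp
  qed
  ultimately show ?thesis unfolding Zs_mem by blast
qed

lemma Zs_split:
  assumes fin: "finite I" and CI: "C \<subseteq> I"
    and nc: "\<forall>(i,j)\<in>E. i \<in> I \<longrightarrow> j \<in> I \<longrightarrow> (i \<in> C \<longleftrightarrow> j \<in> C)"
  shows "card (Zs a b ks I E) = card (Zs a b ks C E) * card (Zs a b ks (I - C) E)"
proof -
  let ?f = "\<lambda>x. (restrict x C, restrict x (I - C))"
  have inj: "inj_on ?f (Zs a b ks I E)"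
  proof (rule inj_onI)
    fix x y assume x: "x \<in> Zs a b ks I E" and y: "y \<in> Zs a b ks I E" and e: "?f x = ?f y"
    have r1: "restrict x C = restrict y C" using arg_cong[OF e, of fst] by simp
    have r2: "restrict x (I - C) = restrict y (I - C)" using arg_cong[OF e, of snd] by simp
    show "x = y" by (rule restrict_split_inj[where V="\<lambda>_. union_verts ks", OF _ _ r1 r2]) (use x y in \<open>simp_all add: Zs_mem\<close>)
  qed
  have sub1: "?f ` Zs a b ks I E \<subseteq> Zs a b ks C E \<times> Zs a b ks (I - C) E"
  proof
    fix yz assume "yz \<in> ?f ` Zs a b ks I E"
    then obtain x where x: "x \<in> Zs a b ks I E" "yz = ?f x" by blast
    show "yz \<in> Zs a b ks C E \<times> Zs a b ks (I - C) E"
      using Zs_restrict[OF x(1) CI] Zs_restrict[OF x(1), of "I - C"] x(2) by auto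
  qed
  have sub2: "Zs a b ks C E \<times> Zs a b ks (I - C) E \<subseteq> ?f ` Zs a b ks I E"
  proof
    fix yz assume yz: "yz \<in> Zs a b ks C E \<times> Zs a b ks (I - C) E"
    obtain y z where yz': "yz = (y, z)" by fastforce
    with yz have y: "y \<in> Zs a b ks C E" and z: "z \<in> Zs a b ks (I - C) E" by auto
    define x where "x = (\<lambda>j. if j \<in> C then y j else z j)"
    have yP: "y \<in> Pi\<^sub>E C (\<lambda>_. union_verts ks)" and zP: "z \<in> Pi\<^sub>E (I - C) (\<lambda>_. union_verts ks)"
      using y z by (simp_all add: Zs_mem)
    have xI: "x \<in> Pi\<^sub>E I (\<lambda>_. union_verts ks)"
    proof (rule PiE_I)
      fix j assume "j \<in> I" then show "x j \<in> union_verts ks"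
        using yP zP by (cases "j \<in> C") (auto simp: x_def)
    next
      fix j assume jn: "j \<notin> I"
      then have "j \<notin> C" using CI by blast
      then have "x j = z j" by (simp add: x_def)
      moreover have "z j = undefined" using PiE_arb[OF zP] jn by blast
      ultimately show "x j = undefined" by simp
    qed
    have "Bu a b ks (x i) (x j)" if ij: "(i,j) \<in> E" "i \<in> I" "j \<in> I" for i j
    proof (cases "i \<in> C")
      case True
      then have "j \<in> C" using nc ij by auto
      then show ?thesis using True y ij unfolding Zs_mem x_def by auto
    next
      case False
      then have "j \<notin> C" using nc ij by auto
      then show ?thesis using False z ij unfolding Zs_mem x_def by auto
    qed
    then have x: "x \<in> Zs a b ks I E" using xI unfolding Zs_mem by blast
    have "restrict x C = y"
    proof
      fix j show "restrict x C j = y j"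
      proof (cases "j \<in> C")
        case True then show ?thesis by (simp add: x_def)
      next
        case False then show ?thesis using PiE_arb[OF yP False] by simp
      qed
    qed
    moreover have "restrict x (I - C) = z"
    proof
      fix j show "restrict x (I - C) j = z j"
      proof (cases "j \<in> I - C")
        case True then show ?thesis by (simp add: x_def)
      next
        case False show ?thesis unfolding restrict_def
          by (rule trans[OF if_not_P[OF False] PiE_arb[OF zP False, symmetric]])
      qed
    qed
    ultimately show "yz \<in> ?f ` Zs a b ks I E" using x yz' by force
  qed
  have "bij_betw ?f (Zs a b ks I E) (Zs a b ks C E \<times> Zs a b ks (I - C) E)"
    unfolding bij_betw_def using inj sub1 sub2 by blast
  then have "card (Zs a b ks I E) = card (Zs a b ks C E \<times> Zs a b ks (I - C) E)" by (rule bij_betw_same_card)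
  then show ?thesis by (simp add: card_cartesian_product)
qed

lemma comp_conn:
  assumes "(i0, j) \<in> (symE I E)\<^sup>*"
  shows "(i0, j) \<in> (symE {j. j \<in> I \<and> (i0, j) \<in> (symE I E)\<^sup>*} E)\<^sup>*"
  using assms
proof (induction rule: rtrancl_induct)
  case base then show ?case by simp
next
  case (step y z)
  have "(i0, z) \<in> (symE I E)\<^sup>*" using step(1,2) by (meson rtrancl.rtrancl_into_rtrancl)
  moreover have "(i0, y) \<in> (symE I E)\<^sup>*" using step(1) .
  ultimately have "(y, z) \<in> symE {j. j \<in> I \<and> (i0, j) \<in> (symE I E)\<^sup>*} E"
    using step(2) by (auto simp: symE_def)
  with step show ?case by (meson rtrancl.rtrancl_into_rtrancl)
qed

lemma F_induct:
  assumes conn: "\<And>C i0. C \<subseteq> I0 \<Longrightarrow> i0 \<in> C \<Longrightarrow> (\<forall>j\<in>C. (i0,j) \<in> (symE C E)\<^sup>*) \<Longrightarrow>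
      card (Zs a b ks C E) = card (Zs a' b' ks' C E)"
    and fin: "finite I0"
  shows "I \<subseteq> I0 \<Longrightarrow> card (Zs a b ks I E) = card (Zs a' b' ks' I E)"
proof (induction "card I" arbitrary: I rule: less_induct)
  case less
  have finI: "finite I" using less.prems fin finite_subset by blast
  show ?case
  proof (cases "I = {}")
    case True
    then show ?thesis by (simp add: Zs_def)
  next
    case False
    then obtain i0 where i0: "i0 \<in> I" by blast
    define C where "C = {j. j \<in> I \<and> (i0, j) \<in> (symE I E)\<^sup>*}"
    have CI: "C \<subseteq> I" by (auto simp: C_def)
    have i0C: "i0 \<in> C" using i0 by (simp add: C_def)
    have nc: "\<forall>(i,j)\<in>E. i \<in> I \<longrightarrow> j \<in> I \<longrightarrow> (i \<in> C \<longleftrightarrow> j \<in> C)"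
    proof (intro ballI impI, clarify)
      fix i j assume ij: "(i,j) \<in> E" "i \<in> I" "j \<in> I"
      have s1: "(i,j) \<in> symE I E" and s2: "(j,i) \<in> symE I E" using ij by (auto simp: symE_def)
      show "(i \<in> C) = (j \<in> C)"
      proof
        assume "i \<in> C" then have "(i0,i) \<in> (symE I E)\<^sup>*" by (simp add: C_def)
        then have "(i0,j) \<in> (symE I E)\<^sup>*" using s1 by (rule rtrancl_into_rtrancl)
        then show "j \<in> C" using ij by (simp add: C_def)
      next
        assume "j \<in> C" then have "(i0,j) \<in> (symE I E)\<^sup>*" by (simp add: C_def)
        then have "(i0,i) \<in> (symE I E)\<^sup>*" using s2 by (rule rtrancl_into_rtrancl)
        then show "i \<in> C" using ij by (simp add: C_def)
      qed
    qed
    have cC: "\<forall>j\<in>C. (i0,j) \<in> (symE C E)\<^sup>*" using comp_conn unfolding C_def by blast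
    have "card (I - C) < card I" by (rule psubset_card_mono[OF finI]) (use i0C CI in blast)
    then have ih: "card (Zs a b ks (I - C) E) = card (Zs a' b' ks' (I - C) E)"
      using less.hyps[of "I - C"] less.prems by blast
    have "card (Zs a b ks C E) = card (Zs a' b' ks' C E)" using conn[OF _ i0C cC] CI less.prems by blast
    then show ?thesis using Zs_split[OF finI CI nc, of a b ks] Zs_split[OF finI CI nc, of a' b' ks'] ih by simp
  qed
qed

lemma card_union_verts: "card (union_verts ks) = sum_list ks"
proof -
  have "union_verts ks = (\<Union>t\<in>{..<length ks}. {t} \<times> {1..ks!t})"
    by (auto simp: union_verts_def)
  then have "card (union_verts ks) = (\<Sum>t\<in>{..<length ks}. card ({t} \<times> {1..ks!t}))"
    by (simp only:) (rule card_UN_disjoint, auto)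
  also have "\<dots> = (\<Sum>t\<in>{..<length ks}. ks!t)" by (simp add: card_cartesian_product)
  also have "\<dots> = sum_list ks" by (simp add: sum_list_sum_nth atLeast0LessThan)
  finally show ?thesis .
qed

lemma Bu_Bm: "Bu a b ks (t,u) (t,w) \<longleftrightarrow> Bm a b (ks!t+1) u w"
  unfolding Bu_def union_adj_def gadj_def Bm_def by auto

lemma fst_const:
  assumes x: "x \<in> Zs a b ks C E" and j: "(i0, j) \<in> (symE C E)\<^sup>*"
  shows "fst (x j) = fst (x i0)"
  using j
proof (induction rule: rtrancl_induct)
  case base then show ?case by simp
next
  case (step y z)
  then have "Bu a b ks (x y) (x z)" using x unfolding symE_def Zs_def by (auto intro: Bu_sym)
  then have "fst (x y) = fst (x z)" unfolding Bu_def union_adj_def by auto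
  with step show ?case by simp
qed

definition emb :: "nat set \<Rightarrow> nat \<Rightarrow> (nat \<Rightarrow> nat) \<Rightarrow> nat \<Rightarrow> nat \<times> nat" where
  "emb C t y = (\<lambda>j. if j \<in> C then (t, y j) else undefined)"

lemma SolI: "y \<in> Pi\<^sub>E I (\<lambda>_. {1..p-1}) \<Longrightarrow> y i0 = v \<Longrightarrow>
   (\<And>i j. (i,j) \<in> E \<Longrightarrow> i \<in> I \<Longrightarrow> j \<in> I \<Longrightarrow> Bm a b p (y i) (y j)) \<Longrightarrow> y \<in> Sol a b p v I E i0"
  unfolding Sol_def by auto

lemma SolD: "y \<in> Sol a b p v I E i0 \<Longrightarrow> y \<in> Pi\<^sub>E I (\<lambda>_. {1..p-1}) \<and> y i0 = v \<and>
   (\<forall>i j. (i,j) \<in> E \<longrightarrow> i \<in> I \<longrightarrow> j \<in> I \<longrightarrow> Bm a b p (y i) (y j))"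
  unfolding Sol_def by auto

lemma conn_count:
  assumes fin: "finite C" and i0: "i0 \<in> C" and conn: "\<forall>j\<in>C. (i0,j) \<in> (symE C E)\<^sup>*"
    and W: "\<forall>tv\<in>union_verts ks. card (Sol a b (ks!fst tv+1) (snd tv) C E i0) = W"
  shows "card (Zs a b ks C E) = sum_list ks * W"
proof -
  let ?S = "\<lambda>tv::nat\<times>nat. Sol a b (ks!fst tv+1) (snd tv) C E i0"
  have sub1: "Zs a b ks C E \<subseteq> (\<Union>tv\<in>union_verts ks. emb C (fst tv) ` ?S tv)"
  proof
    fix x assume x: "x \<in> Zs a b ks C E"
    have xP: "x \<in> Pi\<^sub>E C (\<lambda>_. union_verts ks)" using x by (simp add: Zs_mem)
    obtain t v where tv: "x i0 = (t, v)" by fastforce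
    have tvV: "(t,v) \<in> union_verts ks" using PiE_mem[OF xP i0] tv by simp
    have ft: "fst (x j) = t" if "j \<in> C" for j using fst_const[OF x] conn that tv by force
    define y where "y = (\<lambda>j. if j \<in> C then snd (x j) else undefined)"
    have xe: "x = emb C t y"
    proof
      fix j show "x j = emb C t y j"
      proof (cases "j \<in> C")
        case True
        then have "x j = (fst (x j), snd (x j))" by simp
        then show ?thesis using True ft[OF True] by (simp add: emb_def y_def)
      next
        case False
        then show ?thesis using PiE_arb[OF xP False] by (simp add: emb_def)
      qed
    qed
    have yS: "y \<in> ?S (t,v)"
    proof -
      have "y \<in> Pi\<^sub>E C (\<lambda>_. {1..ks!t+1-1})"
      proof (rule PiE_I)
        fix j assume j: "j \<in> C"
        have "x j \<in> union_verts ks" using PiE_mem[OF xP j] .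
        moreover have "x j = (t, snd (x j))" using ft[OF j] by (metis prod.collapse)
        ultimately have "(t, snd (x j)) \<in> union_verts ks" by simp
        then show "y j \<in> {1..ks!t+1-1}" using j by (simp add: y_def union_verts_def)
      next
        fix j assume "j \<notin> C" then show "y j = undefined" by (simp add: y_def)
      qed
      moreover have "y i0 = v" using i0 tv by (simp add: y_def)
      moreover have "Bm a b (ks!t+1) (y i) (y j)" if "(i,j) \<in> E" "i \<in> C" "j \<in> C" for i j
      proof -
        have "Bu a b ks (x i) (x j)" using x that unfolding Zs_mem by blast
        then have "Bu a b ks (t, y i) (t, y j)" using xe that by (simp add: emb_def)
        then show ?thesis using Bu_Bm by blast
      qed
      ultimately show ?thesis using SolI[of y C "ks!t+1" i0 v E a b] by simp
    qed
    show "x \<in> (\<Union>tv\<in>union_verts ks. emb C (fst tv) ` ?S tv)"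
      using tvV xe yS by (intro UN_I[of "(t,v)"]) auto
  qed
  have sub2: "(\<Union>tv\<in>union_verts ks. emb C (fst tv) ` ?S tv) \<subseteq> Zs a b ks C E"
  proof
    fix x assume "x \<in> (\<Union>tv\<in>union_verts ks. emb C (fst tv) ` ?S tv)"
    then obtain tv :: "nat \<times> nat" and y where tv0: "tv \<in> union_verts ks" and y0: "y \<in> ?S tv" and xe: "x = emb C (fst tv) y" by blast
    obtain t v where tvd: "tv = (t, v)" by fastforce
    have tv: "(t,v) \<in> union_verts ks" and y: "y \<in> ?S (t,v)" using tv0 y0 tvd by auto
    have yP: "y \<in> Pi\<^sub>E C (\<lambda>_. {1..ks!t+1-1})" using SolD[OF y] by simp
    have "emb C t y \<in> Pi\<^sub>E C (\<lambda>_. union_verts ks)"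
    proof (rule PiE_I)
      fix j assume j: "j \<in> C"
      have "y j \<in> {1..ks!t}" using PiE_mem[OF yP j] by simp
      then show "emb C t y j \<in> union_verts ks" using j tv by (simp add: emb_def union_verts_def)
    next
      fix j assume "j \<notin> C" then show "emb C t y j = undefined" by (simp add: emb_def)
    qed
    moreover have "Bu a b ks (emb C t y i) (emb C t y j)" if "(i,j) \<in> E" "i \<in> C" "j \<in> C" for i j
    proof -
      have "Bm a b (ks!t+1) (y i) (y j)" using SolD[OF y] that by simp
      then show ?thesis using that Bu_Bm by (simp add: emb_def)
    qed
    ultimately have "emb C t y \<in> Zs a b ks C E" unfolding Zs_mem by blast
    then show "x \<in> Zs a b ks C E" using xe tvd by simp
  qed
  have eq: "Zs a b ks C E = (\<Union>tv\<in>union_verts ks. emb C (fst tv) ` ?S tv)" using sub1 sub2 by (rule equalityI)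
  have finS: "finite (?S tv)" for tv :: "nat \<times> nat"
    by (rule finite_subset[of _ "Pi\<^sub>E C (\<lambda>_. {1..ks!fst tv+1-1})"]) (use SolD in blast, intro finite_PiE fin, simp)
  have disj: "\<forall>tv\<in>union_verts ks. \<forall>tv'\<in>union_verts ks. tv \<noteq> tv' \<longrightarrow>
      emb C (fst tv) ` ?S tv \<inter> emb C (fst tv') ` ?S tv' = {}"
  proof (intro ballI impI)
    fix tv tv' :: "nat \<times> nat" assume ne: "tv \<noteq> tv'"
    show "emb C (fst tv) ` ?S tv \<inter> emb C (fst tv') ` ?S tv' = {}"
    proof (rule ccontr)
      assume "emb C (fst tv) ` ?S tv \<inter> emb C (fst tv') ` ?S tv' \<noteq> {}"
      then obtain y y' where y: "y \<in> ?S tv" and y': "y' \<in> ?S tv'" and e: "emb C (fst tv) y = emb C (fst tv') y'" by blast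
      have "emb C (fst tv) y i0 = emb C (fst tv') y' i0" using e by simp
      then have "(fst tv, y i0) = (fst tv', y' i0)" using i0 by (simp add: emb_def)
      moreover have "y i0 = snd tv" "y' i0 = snd tv'" using SolD[OF y] SolD[OF y'] by simp_all
      ultimately show False using ne by (simp add: prod_eq_iff)
    qed
  qed
  have inj: "inj_on (emb C t) (?S tv)" for t and tv :: "nat \<times> nat"
  proof (rule inj_onI)
    fix y y' assume y: "y \<in> ?S tv" and y': "y' \<in> ?S tv" and e: "emb C t y = emb C t y'"
    have yP: "y \<in> Pi\<^sub>E C (\<lambda>_. {1..ks!fst tv+1-1})" using SolD[OF y] by simp
    have yP': "y' \<in> Pi\<^sub>E C (\<lambda>_. {1..ks!fst tv+1-1})" using SolD[OF y'] by simp
    show "y = y'"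
    proof
      fix j show "y j = y' j"
      proof (cases "j \<in> C")
        case True
        have "emb C t y j = emb C t y' j" using e by simp
        then show ?thesis using True by (simp add: emb_def)
      next
        case False then show ?thesis using PiE_arb[OF yP False] PiE_arb[OF yP' False] by simp
      qed
    qed
  qed
  have "card (Zs a b ks C E) = (\<Sum>tv\<in>union_verts ks. card (emb C (fst tv) ` ?S tv))"
    unfolding eq by (rule card_UN_disjoint[OF finite_union_verts _ disj]) (use finS in blast)
  also have "\<dots> = (\<Sum>tv\<in>union_verts ks. W)"
  proof (rule sum.cong[OF refl])
    fix tv assume "tv \<in> union_verts ks"
    then show "card (emb C (fst tv) ` ?S tv) = W" using W card_image[OF inj] by simp
  qed
  also have "\<dots> = sum_list ks * W" by (simp add: card_union_verts)
  finally show ?thesis .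
qed

lemma ie_split:
  assumes "finite Y"
  shows "card {x\<in>Y. \<forall>p\<in>insert q P. \<not> R p x} =
       card {x\<in>Y. \<forall>p\<in>P. \<not> R p x} - card {x\<in>{x\<in>Y. R q x}. \<forall>p\<in>P. \<not> R p x}"
proof -
  have "{x\<in>Y. \<forall>p\<in>insert q P. \<not> R p x} = {x\<in>Y. \<forall>p\<in>P. \<not> R p x} - {x\<in>{x\<in>Y. R q x}. \<forall>p\<in>P. \<not> R p x}"
    by auto
  moreover have "{x\<in>{x\<in>Y. R q x}. \<forall>p\<in>P. \<not> R p x} \<subseteq> {x\<in>Y. \<forall>p\<in>P. \<not> R p x}" by auto
  moreover have "finite {x\<in>{x\<in>Y. R q x}. \<forall>p\<in>P. \<not> R p x}" using assms by simp
  ultimately show ?thesis by (simp add: card_Diff_subset)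
qed

lemma ie:
  fixes Q :: "'p \<Rightarrow> 'a \<Rightarrow> bool" and Q' :: "'p \<Rightarrow> 'b \<Rightarrow> bool"
  assumes "finite P"
  shows "\<forall>(X::'a set) (X'::'b set). finite X \<longrightarrow> finite X' \<longrightarrow>
    (\<forall>E\<subseteq>P. card {x\<in>X. \<forall>p\<in>E. Q p x} = card {x\<in>X'. \<forall>p\<in>E. Q' p x}) \<longrightarrow>
    card {x\<in>X. \<forall>p\<in>P. \<not> Q p x} = card {x\<in>X'. \<forall>p\<in>P. \<not> Q' p x}"
  using assms
proof (induction P)
  case empty
  show ?case
  proof (intro allI impI)
    fix X :: "'a set" and X' :: "'b set"
    assume "\<forall>E\<subseteq>{}. card {x\<in>X. \<forall>p\<in>E. Q p x} = card {x\<in>X'. \<forall>p\<in>E. Q' p x}"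
    then have "card {x\<in>X. \<forall>p\<in>{}. Q p x} = card {x\<in>X'. \<forall>p\<in>{}. Q' p x}" by blast
    then show "card {x\<in>X. \<forall>p\<in>{}. \<not> Q p x} = card {x\<in>X'. \<forall>p\<in>{}. \<not> Q' p x}" by simp
  qed
next
  case (insert q P)
  show ?case
  proof (intro allI impI)
    fix X :: "'a set" and X' :: "'b set"
    assume fX: "finite X" and fX': "finite X'"
      and h: "\<forall>E\<subseteq>insert q P. card {x\<in>X. \<forall>p\<in>E. Q p x} = card {x\<in>X'. \<forall>p\<in>E. Q' p x}"
    have h1: "\<forall>E\<subseteq>P. card {x\<in>X. \<forall>p\<in>E. Q p x} = card {x\<in>X'. \<forall>p\<in>E. Q' p x}"
      using h by blast
    have 1: "card {x\<in>X. \<forall>p\<in>P. \<not> Q p x} = card {x\<in>X'. \<forall>p\<in>P. \<not> Q' p x}"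
      using insert.IH fX fX' h1 by blast
    have h2: "\<forall>E\<subseteq>P. card {x\<in>{x\<in>X. Q q x}. \<forall>p\<in>E. Q p x} = card {x\<in>{x\<in>X'. Q' q x}. \<forall>p\<in>E. Q' p x}"
    proof (intro allI impI)
      fix E assume "E \<subseteq> P"
      then have "insert q E \<subseteq> insert q P" by auto
      with h have "card {x\<in>X. \<forall>p\<in>insert q E. Q p x} = card {x\<in>X'. \<forall>p\<in>insert q E. Q' p x}" by blast
      moreover have "{x\<in>X. \<forall>p\<in>insert q E. Q p x} = {x\<in>{x\<in>X. Q q x}. \<forall>p\<in>E. Q p x}" by auto
      moreover have "{x\<in>X'. \<forall>p\<in>insert q E. Q' p x} = {x\<in>{x\<in>X'. Q' q x}. \<forall>p\<in>E. Q' p x}" by auto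
      ultimately show "card {x\<in>{x\<in>X. Q q x}. \<forall>p\<in>E. Q p x} = card {x\<in>{x\<in>X'. Q' q x}. \<forall>p\<in>E. Q' p x}" by simp
    qed
    have fq: "finite {x\<in>X. Q q x}" "finite {x\<in>X'. Q' q x}" using fX fX' by simp_all
    have 2: "card {x\<in>{x\<in>X. Q q x}. \<forall>p\<in>P. \<not> Q p x} = card {x\<in>{x\<in>X'. Q' q x}. \<forall>p\<in>P. \<not> Q' p x}"
      using insert.IH fq h2 by blast
    show "card {x\<in>X. \<forall>p\<in>insert q P. \<not> Q p x} = card {x\<in>X'. \<forall>p\<in>insert q P. \<not> Q' p x}"
      using ie_split[OF fX, of q P Q] ie_split[OF fX', of q P Q'] 1 2 by simp
  qed
qed

definition Fam :: "nat list \<Rightarrow> nat list \<Rightarrow> nat list \<Rightarrow> nat \<Rightarrow> (nat \<times> nat) set set" where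
  "Fam a b ks n = {S. S \<subseteq> union_verts ks \<and> card S = n \<and> (\<forall>x\<in>S. \<forall>y\<in>S. \<not> union_adj a b ks x y)}"

definition LS :: "nat list \<Rightarrow> nat list \<Rightarrow> nat list \<Rightarrow> nat \<Rightarrow> (nat \<times> nat) list set" where
  "LS a b ks n = {xs. length xs = n \<and> set xs \<subseteq> union_verts ks \<and>
      (\<forall>i j. i < j \<and> j < n \<longrightarrow> \<not> Bu a b ks (xs!i) (xs!j))}"

lemma union_adj_sym: "union_adj a b ks x y \<Longrightarrow> union_adj a b ks y x"
  unfolding union_adj_def gadj_def by auto

lemma union_adj_irrefl: "\<not> union_adj a b ks x x"
  unfolding union_adj_def gadj_def by auto

lemma LS_eq: "LS a b ks n = (\<Union>S\<in>Fam a b ks n. {xs. length xs = n \<and> distinct xs \<and> set xs \<subseteq> S})"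
proof
  show "LS a b ks n \<subseteq> (\<Union>S\<in>Fam a b ks n. {xs. length xs = n \<and> distinct xs \<and> set xs \<subseteq> S})"
  proof
    fix xs assume xs: "xs \<in> LS a b ks n"
    have len: "length xs = n" and sv: "set xs \<subseteq> union_verts ks"
      and lt: "\<And>i j. i < j \<Longrightarrow> j < n \<Longrightarrow> \<not> Bu a b ks (xs!i) (xs!j)"
      using xs unfolding LS_def by auto
    have nb: "\<not> Bu a b ks (xs!i) (xs!j)" if "i < n" "j < n" "i \<noteq> j" for i j
    proof (cases "i < j")
      case True then show ?thesis using lt that by blast
    next
      case False
      then have "j < i" using that by simp
      then have "\<not> Bu a b ks (xs!j) (xs!i)" using lt that by blast
      then show ?thesis using Bu_sym by blast
    qed
    have d: "distinct xs" unfolding distinct_conv_nth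
    proof (intro allI impI)
      fix i j assume "i < length xs" "j < length xs" "i \<noteq> j"
      then show "xs!i \<noteq> xs!j" using nb[of i j] len by (auto simp: Bu_def)
    qed
    have na: "\<not> union_adj a b ks x y" if xin: "x \<in> set xs" "y \<in> set xs" for x y
    proof -
      obtain i where i: "i < n" "x = xs!i" using xin(1) len by (auto simp: in_set_conv_nth)
      obtain j where j: "j < n" "y = xs!j" using xin(2) len by (auto simp: in_set_conv_nth)
      show ?thesis
      proof (cases "i = j")
        case True then show ?thesis using i j union_adj_irrefl by simp
      next
        case False then show ?thesis using nb[OF i(1) j(1) False] i j by (simp add: Bu_def)
      qed
    qed
    have "card (set xs) = n" using distinct_card[OF d] len by simp
    then have "set xs \<in> Fam a b ks n" using sv na unfolding Fam_def by blast
    then show "xs \<in> (\<Union>S\<in>Fam a b ks n. {xs. length xs = n \<and> distinct xs \<and> set xs \<subseteq> S})"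
      using len d by blast
  qed
next
  show "(\<Union>S\<in>Fam a b ks n. {xs. length xs = n \<and> distinct xs \<and> set xs \<subseteq> S}) \<subseteq> LS a b ks n"
  proof
    fix xs assume "xs \<in> (\<Union>S\<in>Fam a b ks n. {xs. length xs = n \<and> distinct xs \<and> set xs \<subseteq> S})"
    then obtain S where S: "S \<in> Fam a b ks n" and len: "length xs = n" and d: "distinct xs" and sS: "set xs \<subseteq> S"
      by blast
    have SV: "S \<subseteq> union_verts ks" and nS: "\<forall>x\<in>S. \<forall>y\<in>S. \<not> union_adj a b ks x y"
      using S unfolding Fam_def by auto
    have "\<not> Bu a b ks (xs!i) (xs!j)" if "i < j" "j < n" for i j
    proof -
      have "i < length xs" "j < length xs" using that len by auto
      then have ne: "xs!i \<noteq> xs!j" using d that(1) by (simp add: nth_eq_iff_index_eq)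
      have "xs!i \<in> S" "xs!j \<in> S" using sS \<open>i < length xs\<close> \<open>j < length xs\<close> nth_mem by blast+
      then have "\<not> union_adj a b ks (xs!i) (xs!j)" using nS by blast
      then show ?thesis using ne by (simp add: Bu_def)
    qed
    then show "xs \<in> LS a b ks n" using len sS SV unfolding LS_def by auto
  qed
qed

lemma card_LS: "card (LS a b ks n) = card (Fam a b ks n) * \<Prod>{1..n}"
proof -
  have finF: "finite (Fam a b ks n)"
    by (rule finite_subset[of _ "Pow (union_verts ks)"]) (auto simp: Fam_def finite_union_verts)
  have finS: "finite S" if "S \<in> Fam a b ks n" for S
    using that finite_subset finite_union_verts unfolding Fam_def by blast
  have cardS: "card S = n" if "S \<in> Fam a b ks n" for S using that unfolding Fam_def by blast
  have cS: "card {xs. length xs = n \<and> distinct xs \<and> set xs \<subseteq> S} = \<Prod>{1..n}" if "S \<in> Fam a b ks n" for S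
    using card_lists_distinct_length_eq[OF finS[OF that], of n] cardS[OF that] by simp
  have eqS: "set xs = S" if "S \<in> Fam a b ks n" "length xs = n" "distinct xs" "set xs \<subseteq> S" for S xs
  proof -
    have "card (set xs) = card S" using distinct_card[OF that(3)] that(2) cardS[OF that(1)] by simp
    then show ?thesis using card_subset_eq[OF finS[OF that(1)] that(4)] by simp
  qed
  have "card (LS a b ks n) = (\<Sum>S\<in>Fam a b ks n. card {xs. length xs = n \<and> distinct xs \<and> set xs \<subseteq> S})"
    unfolding LS_eq
  proof (rule card_UN_disjoint[OF finF])
    show "\<forall>S\<in>Fam a b ks n. finite {xs. length xs = n \<and> distinct xs \<and> set xs \<subseteq> S}"
    proof
      fix S assume "S \<in> Fam a b ks n"
      then have "finite {xs. set xs \<subseteq> S \<and> length xs = n}" using finS finite_lists_length_eq by blast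
      then show "finite {xs. length xs = n \<and> distinct xs \<and> set xs \<subseteq> S}" by (rule finite_subset[rotated]) auto
    qed
    show "\<forall>S\<in>Fam a b ks n. \<forall>S'\<in>Fam a b ks n. S \<noteq> S' \<longrightarrow>
      {xs. length xs = n \<and> distinct xs \<and> set xs \<subseteq> S} \<inter> {xs. length xs = n \<and> distinct xs \<and> set xs \<subseteq> S'} = {}"
    proof (intro ballI impI)
      fix S S' assume S: "S \<in> Fam a b ks n" and S': "S' \<in> Fam a b ks n" and ne: "S \<noteq> S'"
      show "{xs. length xs = n \<and> distinct xs \<and> set xs \<subseteq> S} \<inter> {xs. length xs = n \<and> distinct xs \<and> set xs \<subseteq> S'} = {}"
      proof (rule ccontr)
        assume "{xs. length xs = n \<and> distinct xs \<and> set xs \<subseteq> S} \<inter> {xs. length xs = n \<and> distinct xs \<and> set xs \<subseteq> S'} \<noteq> {}"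
        then obtain xs where "length xs = n" "distinct xs" "set xs \<subseteq> S" "set xs \<subseteq> S'" by blast
        then have "set xs = S" "set xs = S'" using eqS S S' by blast+
        then show False using ne by simp
      qed
    qed
  qed
  also have "\<dots> = card (Fam a b ks n) * \<Prod>{1..n}" using cS by simp
  finally show ?thesis .
qed

lemma num_Fam: "num_indep_sets a b ks n = card (Fam a b ks n)"
  by (simp add: num_indep_sets_def Fam_def)

definition XP :: "nat list \<Rightarrow> nat list \<Rightarrow> nat list \<Rightarrow> nat \<Rightarrow> (nat \<Rightarrow> nat \<times> nat) set" where
  "XP a b ks n = {x \<in> Pi\<^sub>E {0..<n} (\<lambda>_. union_verts ks). \<forall>p\<in>{(i,j). i < j \<and> j < n}. \<not> Bu a b ks (x (fst p)) (x (snd p))}"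

lemma card_LS_XP: "card (LS a b ks n) = card (XP a b ks n)"
proof (rule bij_betw_same_card[of "\<lambda>xs i. if i < n then xs!i else undefined"], rule bij_betw_byWitness[of _ "\<lambda>x. map x [0..<n]"])
  show "\<forall>xs\<in>LS a b ks n. map (\<lambda>i. if i < n then xs ! i else undefined) [0..<n] = xs"
    by (auto simp: LS_def intro: nth_equalityI)
  show "\<forall>x\<in>XP a b ks n. (\<lambda>i. if i < n then map x [0..<n] ! i else undefined) = x"
    by (auto simp: XP_def PiE_def extensional_def fun_eq_iff)
  show "(\<lambda>xs i. if i < n then xs ! i else undefined) ` LS a b ks n \<subseteq> XP a b ks n"
    by (auto simp: LS_def XP_def PiE_def extensional_def Pi_def)
  show "(\<lambda>x. map x [0..<n]) ` XP a b ks n \<subseteq> LS a b ks n"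
    by (auto simp: LS_def XP_def PiE_def Pi_def)
qed

lemma zs_eq:
assumes "E \<subseteq> {(i,j). i < j \<and> j < n}"
shows "{x\<in>Pi\<^sub>E {0..<n} (\<lambda>_. union_verts kk). \<forall>p\<in>E. Bu aa bb kk (x (fst p)) (x (snd p))} = Zs aa bb kk {0..<n} E"

proof (rule Set.set_eqI)
  fix x
  have En: "\<And>i j. (i,j) \<in> E \<Longrightarrow> i \<in> {0..<n} \<and> j \<in> {0..<n}" using assms by auto
  have "(\<forall>p\<in>E. Bu aa bb kk (x (fst p)) (x (snd p))) \<longleftrightarrow>
        (\<forall>i j. (i,j) \<in> E \<longrightarrow> i \<in> {0..<n} \<longrightarrow> j \<in> {0..<n} \<longrightarrow> Bu aa bb kk (x i) (x j))"
  proof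
    assume h: "\<forall>p\<in>E. Bu aa bb kk (x (fst p)) (x (snd p))"
    show "\<forall>i j. (i,j) \<in> E \<longrightarrow> i \<in> {0..<n} \<longrightarrow> j \<in> {0..<n} \<longrightarrow> Bu aa bb kk (x i) (x j)"
    proof (intro allI impI)
      fix i j assume "(i,j) \<in> E" then show "Bu aa bb kk (x i) (x j)" using h by fastforce
    qed
  next
    assume h: "\<forall>i j. (i,j) \<in> E \<longrightarrow> i \<in> {0..<n} \<longrightarrow> j \<in> {0..<n} \<longrightarrow> Bu aa bb kk (x i) (x j)"
    show "\<forall>p\<in>E. Bu aa bb kk (x (fst p)) (x (snd p))"
    proof
      fix p assume p: "p \<in> E"
      obtain i j where pe: "p = (i,j)" by fastforce
      show "Bu aa bb kk (x (fst p)) (x (snd p))" using h En p pe by simp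
    qed
  qed
  then show "x \<in> {x\<in>Pi\<^sub>E {0..<n} (\<lambda>_. union_verts kk). \<forall>p\<in>E. Bu aa bb kk (x (fst p)) (x (snd p))} \<longleftrightarrow> x \<in> Zs aa bb kk {0..<n} E"
    unfolding Zs_mem by simp
qed

lemma XP_Zs_eq:
  assumes "\<forall>E\<subseteq>{(i,j). i < j \<and> j < n}. card (Zs a b ks {0..<n} E) = card (Zs a' b' ks' {0..<n} E)"
  shows "card (XP a b ks n) = card (XP a' b' ks' n)"
proof -
  let ?P = "{(i,j). i < j \<and> j < n}"
  have finP: "finite ?P" by (rule finite_subset[of _ "{0..<n} \<times> {0..<n}"]) auto
  let ?X = "Pi\<^sub>E {0..<n} (\<lambda>_. union_verts ks)" and ?X' = "Pi\<^sub>E {0..<n} (\<lambda>_. union_verts ks')"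
  have fX: "finite ?X" "finite ?X'" by (auto intro!: finite_PiE finite_union_verts)
  have zs: "{x\<in>Pi\<^sub>E {0..<n} (\<lambda>_. union_verts kk). \<forall>p\<in>E. Bu aa bb kk (x (fst p)) (x (snd p))} = Zs aa bb kk {0..<n} E"
    if "E \<subseteq> ?P" for E aa bb kk using zs_eq[OF that] .
  have "\<forall>E\<subseteq>?P. card {x\<in>?X. \<forall>p\<in>E. Bu a b ks (x (fst p)) (x (snd p))} = card {x\<in>?X'. \<forall>p\<in>E. Bu a' b' ks' (x (fst p)) (x (snd p))}"
    using assms zs by simp
  then show ?thesis using ie[OF finP, of "\<lambda>p x. Bu a b ks (x (fst p)) (x (snd p))" "\<lambda>p x. Bu a' b' ks' (x (fst p)) (x (snd p))"] fX
    unfolding XP_def by blast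
qed

lemma num_eq_from_XP:
  assumes "card (XP a b ks n) = card (XP a' b' ks' n)"
  shows "num_indep_sets a b ks n = num_indep_sets a' b' ks' n"
proof -
  have "card (Fam a b ks n) * \<Prod>{1..n} = card (Fam a' b' ks' n) * \<Prod>{1..n}"
    using assms card_LS[of a b ks n] card_LS[of a' b' ks' n] card_LS_XP[of a b ks n] card_LS_XP[of a' b' ks' n] by simp
  moreover have "\<Prod>{1..n} > (0::nat)" by (auto intro: prod_pos)
  ultimately show ?thesis by (simp add: num_Fam)
qed

lemma cmod: "goodm a b (k+1) \<Longrightarrow> v \<in> {1..k} \<Longrightarrow> cmodel a b (k+1) v"
  by (auto simp: cmodel_def)

lemma eqW:
  assumes "cmodel a1 b1 p1 v1" "cmodel a2 b2 p2 v2" "length a2 = length a1"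
    "Hyp a1 b1 p1 Q (Suc L)" "Hyp a2 b2 p2 Q (Suc L)"
    "\<forall>j\<in>I. \<exists>d\<le>L. (i0, j) \<in> (symE I E) ^^ d" "finite I" "i0 \<in> I"
  shows "card (Sol a1 b1 p1 v1 I E i0) = card (Sol a2 b2 p2 v2 I E i0)"
  using card_Sol_le[OF assms(1,2,3,4,5,6,7,8)] card_Sol_le[OF assms(2,1) assms(3)[symmetric] assms(5,4,6,7,8)]
  by simp

lemma main_eq:
  assumes len: "length a' = length a"
    and ne: "ks \<noteq> []" "ks' \<noteq> []"
    and kpos: "\<forall>k\<in>set ks. 0 < k"
    and gm: "\<forall>k\<in>set ks. goodm a b (k+1) \<and> Hyp a b (k+1) Q (Suc (n*n))"
    and gm': "\<forall>k\<in>set ks'. goodm a' b' (k+1) \<and> Hyp a' b' (k+1) Q (Suc (n*n))"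
    and sum: "sum_list ks = sum_list ks'"
  shows "num_indep_sets a b ks n = num_indep_sets a' b' ks' n"
proof (rule num_eq_from_XP, rule XP_Zs_eq, intro allI impI)
  fix E :: "(nat \<times> nat) set"
  assume "E \<subseteq> {(i,j). i < j \<and> j < n}"
  show "card (Zs a b ks {0..<n} E) = card (Zs a' b' ks' {0..<n} E)"
  proof (rule F_induct[where I0 = "{0..<n}"])
    fix C i0 assume C: "C \<subseteq> {0..<n}" and i0: "i0 \<in> C" and conn: "\<forall>j\<in>C. (i0, j) \<in> (symE C E)\<^sup>*"
    have finC: "finite C" using C finite_subset by blast
    have finS: "finite (symE C E)" by (rule finite_subset[of _ "C \<times> C"]) (auto simp: symE_def finC)
    have "card (symE C E) \<le> card (C \<times> C)" by (rule card_mono) (auto simp: symE_def finC)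
    also have "\<dots> = card C * card C" by (simp add: card_cartesian_product)
    also have "\<dots> \<le> n * n" using card_mono[OF _ C] by (simp add: mult_le_mono)
    finally have cS: "card (symE C E) \<le> n * n" .
    have connL: "\<forall>j\<in>C. \<exists>d\<le>n*n. (i0, j) \<in> (symE C E) ^^ d"
    proof
      fix j assume "j \<in> C"
      then have "(i0, j) \<in> (symE C E)\<^sup>*" using conn by blast
      then have "(i0, j) \<in> (\<Union>d\<in>{d. d \<le> card (symE C E)}. (symE C E) ^^ d)"
        unfolding rtrancl_finite_eq_relpow[OF finS] .
      then obtain d where "d \<le> card (symE C E)" "(i0, j) \<in> (symE C E) ^^ d" by blast
      then show "\<exists>d\<le>n*n. (i0, j) \<in> (symE C E) ^^ d" using cS le_trans by blast
    qed
    have hd: "hd ks \<in> set ks" using ne by simp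
    have g0: "goodm a b (hd ks + 1)" and H0: "Hyp a b (hd ks + 1) Q (Suc (n*n))" using gm hd by blast+
    have "hd ks > 0" using kpos hd by blast
    then have cm0: "cmodel a b (hd ks + 1) 1" using cmod[OF g0] by simp
    define W where "W = card (Sol a b (hd ks + 1) 1 C E i0)"
    have W1: "\<forall>tv\<in>union_verts ks. card (Sol a b (ks!fst tv+1) (snd tv) C E i0) = W"
    proof
      fix tv assume tv: "tv \<in> union_verts ks"
      then have k: "ks!fst tv \<in> set ks" "snd tv \<in> {1..ks!fst tv}" by (auto simp: union_verts_def)
      have g1: "goodm a b (ks!fst tv + 1)" "Hyp a b (ks!fst tv+1) Q (Suc (n*n))" using gm k(1) by blast+
      have cm1: "cmodel a b (ks!fst tv+1) (snd tv)" using cmod[OF g1(1) k(2)] .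
      show "card (Sol a b (ks!fst tv+1) (snd tv) C E i0) = W" unfolding W_def
        by (rule eqW[OF cm1 cm0 refl g1(2) H0 connL finC i0])
    qed
    have W2: "\<forall>tv\<in>union_verts ks'. card (Sol a' b' (ks'!fst tv+1) (snd tv) C E i0) = W"
    proof
      fix tv assume tv: "tv \<in> union_verts ks'"
      then have k: "ks'!fst tv \<in> set ks'" "snd tv \<in> {1..ks'!fst tv}" by (auto simp: union_verts_def)
      have g1: "goodm a' b' (ks'!fst tv + 1)" "Hyp a' b' (ks'!fst tv+1) Q (Suc (n*n))" using gm' k(1) by blast+
      have cm1: "cmodel a' b' (ks'!fst tv+1) (snd tv)" using cmod[OF g1(1) k(2)] .
      show "card (Sol a' b' (ks'!fst tv+1) (snd tv) C E i0) = W" unfolding W_def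
        by (rule eqW[OF cm1 cm0 len[symmetric] g1(2) H0 connL finC i0])
    qed
    show "card (Zs a b ks C E) = card (Zs a' b' ks' C E)"
      using conn_count[OF finC i0 conn W1] conn_count[OF finC i0 conn W2] sum by simp
  qed simp_all
qed

definition N0 :: "nat list \<Rightarrow> nat list \<Rightarrow> nat \<Rightarrow> nat" where
  "N0 a b n = (sum_list a + sum_list b + 1) ^ (2 * Suc (n*n))"

lemma entry_le:
  fixes a b :: "nat list"
  assumes "length b = length a" "r < length a"
  shows "a!r \<le> sum_list a + sum_list b" "b!r \<le> sum_list a + sum_list b"
  using elem_le_sum_list[of r a] elem_le_sum_list[of r b] assms by auto

lemma Nw_Dw_le:
  assumes "length b = length a" "validw (length a) w"
  shows "Nw a b w \<le> (sum_list a + sum_list b) ^ length w \<and> Dw a b w \<le> (sum_list a + sum_list b) ^ length w"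
  using assms(2)
proof (induction w)
  case Nil then show ?case by simp
next
  case (Cons s w)
  then have v: "validw (length a) w" and r: "fst s < length a" by (auto simp: validw_def)
  have e: "nst a b s \<le> sum_list a + sum_list b" "dst a b s \<le> sum_list a + sum_list b"
    using entry_le[OF assms(1) r] by (auto simp: nst_def dst_def)
  have ih: "Nw a b w \<le> (sum_list a + sum_list b) ^ length w" "Dw a b w \<le> (sum_list a + sum_list b) ^ length w"
    using Cons.IH[OF v] by auto
  have "Nw a b (s # w) = nst a b s * Nw a b w" "Dw a b (s # w) = dst a b s * Dw a b w"
    by (simp_all add: Nw_def Dw_def)
  moreover have "nst a b s * Nw a b w \<le> (sum_list a + sum_list b) * (sum_list a + sum_list b) ^ length w"
    using mult_le_mono[OF e(1) ih(1)] .
  moreover have "dst a b s * Dw a b w \<le> (sum_list a + sum_list b) * (sum_list a + sum_list b) ^ length w"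
    using mult_le_mono[OF e(2) ih(2)] .
  ultimately show ?case by simp
qed

lemma N0_ge: "sum_list a + sum_list b \<le> N0 a b n"
proof -
  have "sum_list a + sum_list b + 1 \<le> N0 a b n" unfolding N0_def by (rule self_le_power) auto
  then show ?thesis by simp
qed

lemma goodm_of:
  assumes "admissible m a b" "prime p" "p > N0 a b n"
  shows "goodm a b p"
proof -
  have lb: "length b = length a" and pos: "\<forall>r<length a. 0 < a!r \<and> 0 < b!r"
    using assms(1) unfolding admissible_def by auto
  have "a!r < p \<and> b!r < p" if "r < length a" for r
    using entry_le[OF lb that] N0_ge[of a b n] assms(3) by linarith
  then show ?thesis using pos lb assms(2) unfolding goodm_def by blast
qed

lemma prod_bound:
  assumes "admissible m a b" "p > N0 a b n" "validw (length a) w1" "validw (length a) w2"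
    "length w1 \<le> Suc (n*n)" "length w2 \<le> Suc (n*n)"
  shows "Nw a b w1 * Dw a b w2 < p"
proof -
  let ?A = "sum_list a + sum_list b"
  have lb: "length b = length a" using assms(1) by (simp add: admissible_def)
  have b1: "Nw a b w1 \<le> ?A ^ length w1" using Nw_Dw_le[OF lb assms(3)] by blast
  have b2: "Dw a b w2 \<le> ?A ^ length w2" using Nw_Dw_le[OF lb assms(4)] by blast
  have "?A ^ length w1 \<le> (?A+1) ^ length w1" by (rule power_mono) auto
  also have "\<dots> \<le> (?A+1) ^ Suc (n*n)" by (rule power_increasing[OF assms(5)]) simp
  finally have c1: "?A ^ length w1 \<le> (?A+1) ^ Suc (n*n)" .
  have "?A ^ length w2 \<le> (?A+1) ^ length w2" by (rule power_mono) auto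
  also have "\<dots> \<le> (?A+1) ^ Suc (n*n)" by (rule power_increasing[OF assms(6)]) simp
  finally have c2: "?A ^ length w2 \<le> (?A+1) ^ Suc (n*n)" .
  have "Nw a b w1 * Dw a b w2 \<le> (?A+1) ^ Suc (n*n) * (?A+1) ^ Suc (n*n)"
    using mult_le_mono[OF le_trans[OF b1 c1] le_trans[OF b2 c2]] .
  also have "\<dots> = N0 a b n" unfolding N0_def by (simp only: mult_2 power_add)
  finally show ?thesis using assms(2) by simp
qed

lemma Hyp_exact:
  assumes "admissible m a b" "p > N0 a b n"
    and Qd: "\<And>w1 w2. validw (length a) w1 \<Longrightarrow> validw (length a) w2 \<Longrightarrow>
        (Nw a b w1 * Dw a b w2 = Nw a b w2 * Dw a b w1 \<longleftrightarrow> Q w1 w2)"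
  shows "Hyp a b p Q (Suc (n*n))"
  unfolding Hyp_def
proof (intro allI impI, elim conjE)
  fix w1 w2 assume h: "validw (length a) w1" "validw (length a) w2" "length w1 \<le> Suc (n * n)" "length w2 \<le> Suc (n * n)"
  have l1: "Nw a b w1 * Dw a b w2 < p" using prod_bound[OF assms(1,2) h] .
  have l2: "Nw a b w2 * Dw a b w1 < p" using prod_bound[OF assms(1,2) h(2,1,4,3)] .
  have "[Nw a b w1 * Dw a b w2 = Nw a b w2 * Dw a b w1] (mod p) \<longleftrightarrow> Nw a b w1 * Dw a b w2 = Nw a b w2 * Dw a b w1"
  proof
    assume "[Nw a b w1 * Dw a b w2 = Nw a b w2 * Dw a b w1] (mod p)"
    then show "Nw a b w1 * Dw a b w2 = Nw a b w2 * Dw a b w1" using cong_less_modulus_unique_nat l1 l2 by blast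
  next
    assume "Nw a b w1 * Dw a b w2 = Nw a b w2 * Dw a b w1"
    then show "[Nw a b w1 * Dw a b w2 = Nw a b w2 * Dw a b w1] (mod p)" by simp
  qed
  then show "[Nw a b w1 * Dw a b w2 = Nw a b w2 * Dw a b w1] (mod p) = Q w1 w2" using Qd[OF h(1,2)] by simp
qed

definition cnt :: "(nat \<times> bool) list \<Rightarrow> nat \<Rightarrow> bool \<Rightarrow> nat" where
  "cnt w r t = length (filter (\<lambda>x. x = (r,t)) w)"

lemma Nw_Dw_formula:
  assumes "validw (length a) w"
  shows "Nw a b w = (\<Prod>r<length a. a!r ^ cnt w r True * b!r ^ cnt w r False) \<and>
         Dw a b w = (\<Prod>r<length a. b!r ^ cnt w r True * a!r ^ cnt w r False)"
  using assms
proof (induction w)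
  case Nil then show ?case by (simp add: cnt_def)
next
  case (Cons s w)
  obtain r0 bb where s: "s = (r0, bb)" by fastforce
  have v: "validw (length a) w" and r0: "r0 < length a" using Cons.prems s by (auto simp: validw_def)
  have e1: "a!r ^ cnt (s#w) r True * b!r ^ cnt (s#w) r False =
      (a!r ^ cnt w r True * b!r ^ cnt w r False) * (if r = r0 then nst a b s else 1)" for r
    by (cases bb; cases "r = r0") (auto simp: s cnt_def nst_def)
  have e2: "b!r ^ cnt (s#w) r True * a!r ^ cnt (s#w) r False =
      (b!r ^ cnt w r True * a!r ^ cnt w r False) * (if r = r0 then dst a b s else 1)" for r
    by (cases bb; cases "r = r0") (auto simp: s cnt_def dst_def)
  have "(\<Prod>r<length a. a!r ^ cnt (s#w) r True * b!r ^ cnt (s#w) r False) =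
      (\<Prod>r<length a. a!r ^ cnt w r True * b!r ^ cnt w r False) * nst a b s"
    unfolding e1 prod.distrib using r0 by simp
  moreover have "(\<Prod>r<length a. b!r ^ cnt (s#w) r True * a!r ^ cnt (s#w) r False) =
      (\<Prod>r<length a. b!r ^ cnt w r True * a!r ^ cnt w r False) * dst a b s"
    unfolding e2 prod.distrib using r0 by simp
  ultimately show ?case using Cons.IH[OF v] by (simp add: Nw_def Dw_def)
qed

definition Qexp :: "nat \<Rightarrow> (nat \<times> bool) list \<Rightarrow> (nat \<times> bool) list \<Rightarrow> bool" where
  "Qexp m w1 w2 \<longleftrightarrow> (\<forall>r<m. int (cnt w1 r True) - int (cnt w1 r False) = int (cnt w2 r True) - int (cnt w2 r False))"

lemma powi_frac:
  assumes "(x::rat) \<noteq> 0" "y \<noteq> 0"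
  shows "(x / y) powi (int X - int Y) = (x ^ X * y ^ Y) / (x ^ Y * y ^ X)"
proof -
  have "(x / y) powi (int X - int Y) = (x / y) ^ X / (x / y) ^ Y"
    using assms by (simp add: power_int_diff)
  also have "\<dots> = (x ^ X * y ^ Y) / (x ^ Y * y ^ X)" using assms by (simp add: power_divide field_simps)
  finally show ?thesis .
qed

lemma Q2_iff:
  assumes adm: "admissible m a b" and mi: "mult_indep (ratios a b)"
    and v: "validw (length a) w1" "validw (length a) w2"
  shows "Nw a b w1 * Dw a b w2 = Nw a b w2 * Dw a b w1 \<longleftrightarrow> Qexp m w1 w2"
proof -
  have la: "length a = m" and lb: "length b = m" and pos: "\<forall>r<m. 0 < a!r \<and> 0 < b!r"
    using adm by (auto simp: admissible_def)
  define X where "X r = cnt w1 r True + cnt w2 r False" for r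
  define Y where "Y r = cnt w1 r False + cnt w2 r True" for r
  have L: "Nw a b w1 * Dw a b w2 = (\<Prod>r<m. a!r ^ X r * b!r ^ Y r)"
    using Nw_Dw_formula[OF v(1)] Nw_Dw_formula[OF v(2)] la
    by (simp add: X_def Y_def prod.distrib[symmetric] power_add ac_simps)
  have R: "Nw a b w2 * Dw a b w1 = (\<Prod>r<m. a!r ^ Y r * b!r ^ X r)"
    using Nw_Dw_formula[OF v(1)] Nw_Dw_formula[OF v(2)] la
    by (simp add: X_def Y_def prod.distrib[symmetric] power_add ac_simps)
  have Qc: "Qexp m w1 w2 \<longleftrightarrow> (\<forall>r<m. X r = Y r)" unfolding Qexp_def X_def Y_def by auto
  show ?thesis
  proof
    assume eq: "Nw a b w1 * Dw a b w2 = Nw a b w2 * Dw a b w1"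
    define e where "e r = int (X r) - int (Y r)" for r
    have lr: "length (ratios a b) = m" by (simp add: ratios_def la)
    have nth: "ratios a b ! r = of_nat (a!r) / of_nat (b!r)" if "r < m" for r
      using that la by (simp add: ratios_def)
    have "(\<Prod>r<length (ratios a b). (ratios a b ! r) powi e r) =
        (\<Prod>r<m. (of_nat (a!r) ^ X r * of_nat (b!r) ^ Y r) / (of_nat (a!r) ^ Y r * of_nat (b!r) ^ X r :: rat))"
      unfolding lr using pos by (intro prod.cong) (auto simp: nth e_def powi_frac)
    also have "\<dots> = (\<Prod>r<m. of_nat (a!r) ^ X r * of_nat (b!r) ^ Y r) / (\<Prod>r<m. of_nat (a!r) ^ Y r * of_nat (b!r) ^ X r :: rat)"
      by (rule prod_dividef)
    also have "\<dots> = of_nat (\<Prod>r<m. a!r ^ X r * b!r ^ Y r) / of_nat (\<Prod>r<m. a!r ^ Y r * b!r ^ X r)"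
      by simp
    also have "\<dots> = 1"
    proof -
      have "(\<Prod>r<m. a!r ^ Y r * b!r ^ X r) \<noteq> 0" using pos by (simp add: prod_zero_iff)
      then show ?thesis using eq L R by simp
    qed
    finally have "\<forall>r<length (ratios a b). e r = 0" using mi unfolding mult_indep_def by blast
    then show "Qexp m w1 w2" unfolding Qc lr e_def by auto
  next
    assume "Qexp m w1 w2"
    then have "\<forall>r<m. X r = Y r" using Qc by blast
    then show "Nw a b w1 * Dw a b w2 = Nw a b w2 * Dw a b w1" unfolding L R
      by (intro prod.cong) (auto simp: ac_simps)
  qed
qed

theorem corollary3p2:
  fixes n :: nat
  shows "(\<forall>m a b. admissible m a b \<longrightarrow>
            (\<exists>P :: nat \<Rightarrow> rat. \<exists>N :: nat. \<forall>ks :: nat list.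
               length ks \<ge> 1 \<and> (\<forall>k\<in>set ks. k > 0 \<and> prime (k+1) \<and> k+1 > N) \<longrightarrow>
               of_nat (num_indep_sets a b ks n) = P (sum_list ks)))
       \<and> (\<forall>m. \<exists>P :: nat \<Rightarrow> rat. \<forall>a b. admissible m a b \<and> mult_indep (ratios a b) \<longrightarrow>
            (\<exists>N :: nat. \<forall>ks :: nat list.
               length ks \<ge> 1 \<and> (\<forall>k\<in>set ks. k > 0 \<and> prime (k+1) \<and> k+1 > N) \<longrightarrow>
               of_nat (num_indep_sets a b ks n) = P (sum_list ks)))"
proof (intro conjI allI impI)
  fix m a b assume adm: "admissible m a b"
  define good where "good ks \<longleftrightarrow> length ks \<ge> 1 \<and> (\<forall>k\<in>set ks. k > 0 \<and> prime (k+1) \<and> k+1 > N0 a b n)" for ks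
  define P where "P K = (if \<exists>ks. good ks \<and> sum_list ks = K
      then of_nat (num_indep_sets a b (SOME ks. good ks \<and> sum_list ks = K) n) else (0::rat))" for K
  have H: "goodm a b (k+1) \<and> Hyp a b (k+1) (\<lambda>w1 w2. Nw a b w1 * Dw a b w2 = Nw a b w2 * Dw a b w1) (Suc (n*n))"
    if "prime (k+1)" "k+1 > N0 a b n" for k
  proof
    show "goodm a b (k+1)" using goodm_of[OF adm that] .
    show "Hyp a b (k+1) (\<lambda>w1 w2. Nw a b w1 * Dw a b w2 = Nw a b w2 * Dw a b w1) (Suc (n*n))"
      by (rule Hyp_exact[OF adm that(2)]) simp
  qed
  show "\<exists>P :: nat \<Rightarrow> rat. \<exists>N :: nat. \<forall>ks :: nat list.
       length ks \<ge> 1 \<and> (\<forall>k\<in>set ks. k > 0 \<and> prime (k+1) \<and> k+1 > N) \<longrightarrow>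
       of_nat (num_indep_sets a b ks n) = P (sum_list ks)"
  proof (intro exI allI impI)
    fix ks :: "nat list"
    assume ks: "length ks \<ge> 1 \<and> (\<forall>k\<in>set ks. k > 0 \<and> prime (k+1) \<and> k+1 > N0 a b n)"
    then have gk: "good ks" by (simp add: good_def)
    define ks0 where "ks0 = (SOME ks'. good ks' \<and> sum_list ks' = sum_list ks)"
    have k0: "good ks0 \<and> sum_list ks0 = sum_list ks" unfolding ks0_def by (rule someI[of _ ks]) (use gk in simp)
    have g0: "good ks0" and s0: "sum_list ks0 = sum_list ks" using k0 by auto
    have ne: "ks \<noteq> []" "ks0 \<noteq> []" using gk g0 unfolding good_def by auto
    have kp: "\<forall>k\<in>set ks. 0 < k" using gk unfolding good_def by blast
    have gm: "\<forall>k\<in>set ks. goodm a b (k+1) \<and> Hyp a b (k+1) (\<lambda>w1 w2. Nw a b w1 * Dw a b w2 = Nw a b w2 * Dw a b w1) (Suc (n*n))"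
      using gk H unfolding good_def by blast
    have gm0: "\<forall>k\<in>set ks0. goodm a b (k+1) \<and> Hyp a b (k+1) (\<lambda>w1 w2. Nw a b w1 * Dw a b w2 = Nw a b w2 * Dw a b w1) (Suc (n*n))"
      using g0 H unfolding good_def by blast
    have "num_indep_sets a b ks n = num_indep_sets a b ks0 n"
      using main_eq[OF refl ne kp gm gm0 s0[symmetric]] .
    moreover have "P (sum_list ks) = of_nat (num_indep_sets a b ks0 n)"
      unfolding P_def ks0_def using gk by auto
    ultimately show "of_nat (num_indep_sets a b ks n) = P (sum_list ks)" by simp
  qed
next
  fix m
  define good2 where "good2 t \<longleftrightarrow> admissible m (fst t) (fst (snd t)) \<and> mult_indep (ratios (fst t) (fst (snd t))) \<and>
     length (snd (snd t)) \<ge> 1 \<and> (\<forall>k\<in>set (snd (snd t)). k > 0 \<and> prime (k+1) \<and> k+1 > N0 (fst t) (fst (snd t)) n)"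
    for t :: "nat list \<times> nat list \<times> nat list"
  define P where "P K = (if \<exists>t. good2 t \<and> sum_list (snd (snd t)) = K
      then of_nat (num_indep_sets (fst (SOME t. good2 t \<and> sum_list (snd (snd t)) = K))
         (fst (snd (SOME t. good2 t \<and> sum_list (snd (snd t)) = K)))
         (snd (snd (SOME t. good2 t \<and> sum_list (snd (snd t)) = K))) n) else (0::rat))" for K
  have H: "goodm a b (k+1) \<and> Hyp a b (k+1) (Qexp m) (Suc (n*n))"
    if adm: "admissible m a b" and mi: "mult_indep (ratios a b)" and "prime (k+1)" "k+1 > N0 a b n" for a b k
  proof
    show "goodm a b (k+1)" using goodm_of[OF adm that(3,4)] .
    show "Hyp a b (k+1) (Qexp m) (Suc (n*n))"
      by (rule Hyp_exact[OF adm that(4)]) (rule Q2_iff[OF adm mi])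
  qed
  show "\<exists>P :: nat \<Rightarrow> rat. \<forall>a b. admissible m a b \<and> mult_indep (ratios a b) \<longrightarrow>
            (\<exists>N :: nat. \<forall>ks :: nat list.
               length ks \<ge> 1 \<and> (\<forall>k\<in>set ks. k > 0 \<and> prime (k+1) \<and> k+1 > N) \<longrightarrow>
               of_nat (num_indep_sets a b ks n) = P (sum_list ks))"
  proof (intro exI allI impI)
    fix a b ks
    assume ab: "admissible m a b \<and> mult_indep (ratios a b)"
      and ks: "length ks \<ge> 1 \<and> (\<forall>k\<in>set ks. k > 0 \<and> prime (k+1) \<and> k+1 > N0 a b n)"
    then have gk: "good2 (a, b, ks)" by (simp add: good2_def)
    define t0 where "t0 = (SOME t. good2 t \<and> sum_list (snd (snd t)) = sum_list ks)"
    have k0: "good2 t0 \<and> sum_list (snd (snd t0)) = sum_list ks"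
      unfolding t0_def by (rule someI[of _ "(a, b, ks)"]) (use gk in simp)
    obtain a0 b0 ks0 where t0e: "t0 = (a0, b0, ks0)" by (cases t0) auto
    have la: "length a0 = length a" using k0 ab t0e by (simp add: good2_def admissible_def)
    have g0: "good2 (a0, b0, ks0)" and s0: "sum_list ks0 = sum_list ks" using k0 t0e by auto
    have adm0: "admissible m a0 b0" and mi0: "mult_indep (ratios a0 b0)"
      and ks0: "length ks0 \<ge> 1 \<and> (\<forall>k\<in>set ks0. k > 0 \<and> prime (k+1) \<and> k+1 > N0 a0 b0 n)"
      using g0 unfolding good2_def by auto
    have ne: "ks \<noteq> []" "ks0 \<noteq> []" using ks ks0 by auto
    have kp: "\<forall>k\<in>set ks. 0 < k" using ks by blast
    have gm: "\<forall>k\<in>set ks. goodm a b (k+1) \<and> Hyp a b (k+1) (Qexp m) (Suc (n*n))"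
      using ks H[of a b] ab by blast
    have gm0: "\<forall>k\<in>set ks0. goodm a0 b0 (k+1) \<and> Hyp a0 b0 (k+1) (Qexp m) (Suc (n*n))"
      using ks0 H[OF adm0 mi0] by blast
    have "num_indep_sets a b ks n = num_indep_sets a0 b0 ks0 n"
      using main_eq[OF la ne kp gm gm0 s0[symmetric]] .
    moreover have "P (sum_list ks) = of_nat (num_indep_sets a0 b0 ks0 n)"
    proof -
      have ex: "\<exists>t. good2 t \<and> sum_list (snd (snd t)) = sum_list ks" using gk by auto
      show ?thesis unfolding P_def using ex t0_def[symmetric] t0e by simp
    qed
    ultimately show "of_nat (num_indep_sets a b ks n) = P (sum_list ks)" by simp
  qed
qed

end
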